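(* Let $a_1,\dots,a_n,b_1,\dots,b_m\in\Sigma_M$, and let $\tau$ be a shuffle (interleaving) of the action sequence $!?a_1\cdots !?a_n$ with the action sequence $!?b_1\cdots !?b_m$. Then for every peer $i\in\{1,\dots,N\}$ there is a shuffle $c_1\cdots c_{n+m}$ of the word $a_1\cdots a_n$ with the word $b_1\cdots b_m$ such that $\pi_i(\tau)=\pi_i(!?c_1\cdots !?c_{n+m})$.
   Context: A message set $M=(\Sigma_M,N,\mathrm{src},\mathrm{dst})$ consists of a finite set $\Sigma_M$ of messages, $N\ge1$ peers and maps $\mathrm{src},\mathrm{dst}:\Sigma_M\to\{1,\dots,N\}$ with $\mathrm{src}(a)\neq\mathrm{dst}(a)$. Actions are $!a$ (performed by peer $\mathrm{src}(a)$) and $?a$ (performed by peer $\mathrm{dst}(a)$); $!?a$ abbreviates $!a\cdot ?a$. For a finite sequence of actions $\tau$, $\pi_i(\tau)$ is the subsequence of actions of $\tau$ performed by peer $i$. *)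

theory Defs
  imports Main
begin

definition message_set :: "'m set \<Rightarrow> nat \<Rightarrow> ('m \<Rightarrow> nat) \<Rightarrow> ('m \<Rightarrow> nat) \<Rightarrow> bool" where
  "message_set SigmaM N src dst \<longleftrightarrow> finite SigmaM \<and> N \<ge> 1 \<and>
     (\<forall>a\<in>SigmaM. src a \<in> {1..N} \<and> dst a \<in> {1..N} \<and> src a \<noteq> dst a)"

datatype 'm action = Send 'm | Recv 'm

fun actor :: "('m \<Rightarrow> nat) \<Rightarrow> ('m \<Rightarrow> nat) \<Rightarrow> 'm action \<Rightarrow> nat" where
  "actor src dst (Send a) = src a"
| "actor src dst (Recv a) = dst a"

definition proj :: "('m \<Rightarrow> nat) \<Rightarrow> ('m \<Rightarrow> nat) \<Rightarrow> nat \<Rightarrow> 'm action list \<Rightarrow> 'm action list" where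
  "proj src dst i \<tau> = filter (\<lambda>x. actor src dst x = i) \<tau>"

text \<open>!?a1 ... !?an = !a1 ?a1 ... !an ?an\<close>
definition sendrecv :: "'m list \<Rightarrow> 'm action list" where
  "sendrecv w = concat (map (\<lambda>a. [Send a, Recv a]) w)"

end

theory Submission
  imports Defs
begin

lemma key:
  assumes "\<And>x. length (e x) \<le> 1"
  shows "t \<in> shuffles (concat (map e as)) (concat (map e bs)) \<Longrightarrow>
         \<exists>cs \<in> shuffles as bs. t = concat (map e cs)"
proof (induction "length as + length bs" arbitrary: as bs t rule: less_induct)
  case less
  show ?case
  proof (cases as)
    case Nil
    then show ?thesis using less.prems by (intro bexI[of _ bs]) auto
  next
    case (Cons a as')
    note ca = Cons
    show ?thesis
    proof (cases bs)
      case Nil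
      then show ?thesis using less.prems by (intro bexI[of _ as]) auto
    next
      case (Cons b bs')
      show ?thesis
      proof (cases "e a = []")
        case True
        with less.prems ca have "t \<in> shuffles (concat (map e as')) (concat (map e bs))" by simp
        with less.hyps[of as' bs] ca obtain cs where "cs \<in> shuffles as' bs" "t = concat (map e cs)" by auto
        then show ?thesis using ca True by (intro bexI[of _ "a # cs"]) (auto intro: Cons_in_shuffles_leftI)
      next
        case ea: False
        then obtain x where ex: "e a = [x]" using assms[of a]
          by (cases "e a") auto
        show ?thesis
        proof (cases "e b = []")
          case True
          with less.prems Cons have "t \<in> shuffles (concat (map e as)) (concat (map e bs'))" by simp
          with less.hyps[of as bs'] Cons obtain cs where "cs \<in> shuffles as bs'" "t = concat (map e cs)" by auto
          then show ?thesis using Cons True by (intro bexI[of _ "b # cs"]) (auto intro: Cons_in_shuffles_rightI)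
        next
          case False
          then obtain y where ey: "e b = [y]" using assms[of b]
            by (cases "e b") auto
          from less.prems ca Cons ex ey have
            t: "t \<in> shuffles (x # concat (map e as')) (y # concat (map e bs'))" by simp
          then obtain t' where t': "t = t' " "t' \<noteq> []" by fastforce
          then obtain z zs where tz: "t = z # zs" by (cases t') auto
          from t tz have
            "(z = x \<and> zs \<in> shuffles (concat (map e as')) (concat (map e bs))) \<or>
             (z = y \<and> zs \<in> shuffles (concat (map e as)) (concat (map e bs')))"
            using ca Cons ey ex by (auto simp: Cons_in_shuffles_iff)
          then show ?thesis
          proof
            assume h: "z = x \<and> zs \<in> shuffles (concat (map e as')) (concat (map e bs))"
            with less.hyps[of as' bs] ca obtain cs where "cs \<in> shuffles as' bs" "zs = concat (map e cs)" by auto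
            then show ?thesis using ca ex h tz by (intro bexI[of _ "a # cs"]) (auto intro: Cons_in_shuffles_leftI)
          next
            assume h: "z = y \<and> zs \<in> shuffles (concat (map e as)) (concat (map e bs'))"
            with less.hyps[of as bs'] Cons obtain cs where "cs \<in> shuffles as bs'" "zs = concat (map e cs)" by auto
            then show ?thesis using Cons ey h tz by (intro bexI[of _ "b # cs"]) (auto intro: Cons_in_shuffles_rightI)
          qed
        qed
      qed
    qed
  qed
qed

definition ev :: "('m \<Rightarrow> nat) \<Rightarrow> ('m \<Rightarrow> nat) \<Rightarrow> nat \<Rightarrow> 'm \<Rightarrow> 'm action list" where
  "ev src dst i x = (if src x = i then [Send x] else if dst x = i then [Recv x] else [])"

lemma proj_sendrecv:
  assumes "\<forall>x\<in>set w. src x \<noteq> dst x"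
  shows "proj src dst i (sendrecv w) = concat (map (ev src dst i) w)"
  using assms by (induction w) (auto simp: proj_def sendrecv_def ev_def)

theorem lemma4p8:
  fixes SigmaM :: "'m set" and N :: nat and src dst :: "'m \<Rightarrow> nat"
    and as bs :: "'m list" and \<tau> :: "'m action list" and i :: nat
  assumes "message_set SigmaM N src dst"
    and "set as \<subseteq> SigmaM" and "set bs \<subseteq> SigmaM"
    and "\<tau> \<in> shuffles (sendrecv as) (sendrecv bs)"
    and "i \<in> {1..N}"
  shows "\<exists>cs \<in> shuffles as bs. proj src dst i \<tau> = proj src dst i (sendrecv cs)"
proof -
  have d: "\<forall>x\<in>SigmaM. src x \<noteq> dst x" using assms(1) by (auto simp: message_set_def)
  have "proj src dst i \<tau> \<in> shuffles (proj src dst i (sendrecv as)) (proj src dst i (sendrecv bs))"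
    using assms(4) filter_shuffles unfolding proj_def by blast
  hence P: "proj src dst i \<tau> \<in> shuffles (concat (map (ev src dst i) as)) (concat (map (ev src dst i) bs))"
    using d assms(2,3) by (subst (asm) (1 2) proj_sendrecv) auto
  then obtain cs where cs: "cs \<in> shuffles as bs" "proj src dst i \<tau> = concat (map (ev src dst i) cs)"
  proof -
    have "\<And>x. length (ev src dst i x) \<le> 1" by (simp add: ev_def)
    thus ?thesis using key that P by blast
  qed
  have "set cs \<subseteq> SigmaM" using set_shuffles[OF cs(1)] assms(2,3) by auto
  hence "proj src dst i (sendrecv cs) = concat (map (ev src dst i) cs)"
    using d by (intro proj_sendrecv) auto
  thus ?thesis using cs by (intro bexI[of _ cs]) auto
qed

end
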